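(* For every positive integer $t$ and every real $0<p\le1$, $$\sum_{i=1}^{t} i^p\le \frac{p}{p+1}\cdot\frac{t^p(t+1)^p}{(t+1)^p-t^p}.$$ *)

theory Defs
  imports Complex_Main
begin

end

theory Submission
  imports Defs
begin
lemma amgm_powr:
  fixes a b q :: real
  assumes "a > 0" "b > 0" "a + b = 2" "q \<le> 0"
  shows "2 \<le> a powr q + b powr q"
proof -
  have "a * b = 1 - (a-1)^2" using assms(3) by (simp add: power2_eq_square algebra_simps eq_diff_eq[symmetric] flip: assms(3)) 
  hence ab: "a * b \<le> 1" by (smt (verit) zero_le_power2)
  have "(a*b) powr (-q/2) \<le> 1" using ab assms by (intro powr_le1) auto
  moreover have "(a*b) powr (-q/2) > 0" using assms by auto
  ultimately have g: "1 \<le> (a*b) powr (q/2)" using assms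
    by (simp add: powr_minus_divide  field_simps)
  define x where "x = a powr q"
  define y where "y = b powr q"
  define g where "g = (a*b) powr (q/2)"
  have xy: "x * y = g^2"
  proof -
    have "g^2 = (a*b) powr (q/2 + q/2)" unfolding g_def by (simp add: power2_eq_square powr_add[symmetric])
    also have "\<dots> = x * y" unfolding x_def y_def by (simp add: powr_mult)
    finally show ?thesis by linarith
  qed
  have "x > 0" "y > 0" "g > 0" using assms by (auto simp: x_def y_def g_def)
  have e: "(x+y)^2 = (x-y)^2 + 4*(x*y)" by (simp add: power2_eq_square algebra_simps)
  have "(2*g)^2 = 4*(x*y)" using xy by simp
  hence "(2*g)^2 \<le> (x+y)^2" using e by (metis le_add_same_cancel2 zero_le_power2)
  hence "2*g \<le> x + y" by (rule power2_le_imp_le) (use \<open>x>0\<close> \<open>y>0\<close> in linarith)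
  hence "2 \<le> x + y" using g unfolding g_def by linarith
  thus ?thesis unfolding x_def y_def .
qed

lemma inner:
  fixes r s :: real assumes "0 \<le> r" "r \<le> 1" "0 \<le> s" "s < 1"
  shows "2*r*s \<le> (1+s) powr r - (1-s) powr r"
proof -
  let ?g = "\<lambda>y. (1+y) powr r - (1-y) powr r - 2*r*y"
  have "?g 0 \<le> ?g s"
  proof (rule DERIV_nonneg_imp_increasing_open[OF assms(3)])
    fix y assume y: "0 < y" "y < s"
    have d: "DERIV ?g y :> r*(1+y) powr (r-1) + r*(1-y) powr (r-1) - 2*r"
      using y assms by (auto intro!: derivative_eq_intros simp: algebra_simps)
    have "2 \<le> (1+y) powr (r-1) + (1-y) powr (r-1)" by (rule amgm_powr) (use y assms in auto)
    hence "0 \<le> r*((1+y) powr (r-1) + (1-y) powr (r-1) - 2)" using assms(1) by simp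
    hence "0 \<le> r*(1+y) powr (r-1) + r*(1-y) powr (r-1) - 2*r" by (simp add: algebra_simps)
    thus "\<exists>d. DERIV ?g y :> d \<and> 0 \<le> d" using d by blast
  next
    show "continuous_on {0..s} ?g" using assms by (intro continuous_intros) auto
  qed
  thus ?thesis by simp
qed

lemma Flem:
  fixes p s :: real assumes "0 < p" "p \<le> 1" "0 \<le> s" "s \<le> 1"
  shows "(1+s) powr p + (1-s) powr p \<le> 1 + p + (1-p)*(1-s^2) powr p"
proof -
  let ?F = "\<lambda>y. 1 + p + (1-p)*(1-y^2) powr p - (1+y) powr p - (1-y) powr p"
  have "?F 0 \<le> ?F s"
  proof (rule DERIV_nonneg_imp_increasing_open[OF assms(3)])
    fix y assume y: "0 < y" "y < s"
    have y1: "y < 1" using y assms by simp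
    have "y*y < 1*1" by (rule mult_strict_mono) (use y y1 in auto)
    hence pos: "0 < 1 - y^2" by (simp add: power2_eq_square)
    define a where "a = 1 + y"
    define b where "b = 1 - y"
    have a: "a > 0" and b: "b > 0" using y y1 by (auto simp: a_def b_def)
    have ab: "1 - y^2 = a*b" by (simp add: a_def b_def power2_eq_square algebra_simps)
    have d: "DERIV ?F y :> (1-p)*(p*(1-y^2) powr (p-1)*(-2*y)) - p*(1+y) powr (p-1) + p*(1-y) powr (p-1)"
      using y y1 pos assms by (auto intro!: derivative_eq_intros simp: algebra_simps)
    have i: "2*(1-p)*y \<le> a powr (1-p) - b powr (1-p)" unfolding a_def b_def
      by (rule inner) (use y y1 assms in auto)
    have C: "(1-y^2) powr (p-1) = a powr (p-1) * b powr (p-1)" using ab a b by (simp add: powr_mult)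
    have Cpos: "0 < a powr (p-1) * b powr (p-1)" using a b by simp
    have ea: "a powr (1-p) * a powr (p-1) = 1" using a by (simp add: powr_add[symmetric])
    have eb: "b powr (1-p) * b powr (p-1) = 1" using b by (simp add: powr_add[symmetric])
    have "2*(1-p)*y * (a powr (p-1) * b powr (p-1)) \<le> (a powr (1-p) - b powr (1-p)) * (a powr (p-1) * b powr (p-1))"
      by (rule mult_right_mono[OF i]) (use Cpos in simp)
    also have "\<dots> = (a powr (1-p) * a powr (p-1)) * b powr (p-1) - (b powr (1-p) * b powr (p-1)) * a powr (p-1)"
      by (simp add: algebra_simps)
    also have "\<dots> = b powr (p-1) - a powr (p-1)" using ea eb by simp
    finally have k: "2*(1-p)*y * (1-y^2) powr (p-1) \<le> b powr (p-1) - a powr (p-1)" using C by simp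
    have "0 \<le> p * (b powr (p-1) - a powr (p-1) - 2*(1-p)*y * (1-y^2) powr (p-1))"
      using k assms by simp
    hence "0 \<le> (1-p)*(p*(1-y^2) powr (p-1)*(-2*y)) - p*(1+y) powr (p-1) + p*(1-y) powr (p-1)"
      unfolding a_def b_def by (simp add: algebra_simps)
    thus "\<exists>d. DERIV ?F y :> d \<and> 0 \<le> d" using d by blast
  next
    have "continuous_on {0..s} (\<lambda>y. (1-y^2) powr p)" using assms
      by (intro continuous_on_powr' continuous_intros) (auto simp: power2_eq_square intro: mult_le_one)
    moreover have "continuous_on {0..s} (\<lambda>y. (1-y) powr p)" using assms
      by (intro continuous_on_powr' continuous_intros) auto
    moreover have "continuous_on {0..s} (\<lambda>y. (1+y) powr p)" using assms
      by (intro continuous_on_powr' continuous_intros) auto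
    ultimately show "continuous_on {0..s} ?F"
      by (intro continuous_on_diff continuous_on_add continuous_on_mult continuous_on_const) auto
  qed
  thus ?thesis by simp
qed

lemma core:
  fixes p x :: real assumes "0 < p" "p \<le> 1" "1 \<le> x"
  shows "x powr p * (x+1) powr p + x powr p * (x-1) powr p
         \<le> (1+p)*(x powr p)^2 + (1-p)*((x+1) powr p * (x-1) powr p)"
proof -
  have xp: "x > 0" using assms by simp
  define X where "X = x powr p"
  define P where "P = (x+1) powr p"
  define M where "M = (x-1) powr p"
  have X: "X > 0" using xp by (simp add: X_def)
  have F: "(1+1/x) powr p + (1-1/x) powr p \<le> 1 + p + (1-p)*(1-(1/x)^2) powr p"
    by (rule Flem) (use assms xp in \<open>auto simp: field_simps\<close>)
  have e1: "(1+1/x) powr p = P/X" using xp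
    by (simp add: P_def X_def powr_divide[symmetric] field_simps)
  have e2: "(1-1/x) powr p = M/X" using xp
    by (simp add: M_def X_def powr_divide[symmetric] field_simps)
  have "1-(1/x)^2 = ((x+1)*(x-1))/(x*x)" using xp by (simp add: field_simps power2_eq_square)
  hence e3: "(1-(1/x)^2) powr p = P*M/(X*X)"
    by (simp add: P_def M_def X_def powr_divide powr_mult)
  have "P/X + M/X \<le> 1 + p + (1-p)*(P*M/(X*X))" using F e1 e2 e3 by simp
  hence i: "(P/X + M/X) * (X*X) \<le> (1 + p + (1-p)*(P*M/(X*X))) * (X*X)"
    using X by (intro mult_right_mono) auto
  have l: "(P/X + M/X) * (X*X) = X*P + X*M" using X by (simp add: field_simps)
  have r: "(1 + p + (1-p)*(P*M/(X*X))) * (X*X) = (1+p)*X^2 + (1-p)*(P*M)" using X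
    by (simp add: field_simps power2_eq_square)
  have "X*P + X*M \<le> (1+p)*X^2 + (1-p)*(P*M)" using i unfolding l r .
  thus ?thesis by (simp add: X_def P_def M_def)
qed

lemma step:
  fixes p x :: real assumes "0 < p" "p \<le> 1" "1 \<le> x"
  shows "p/(p+1) * ((x-1) powr p * x powr p / (x powr p - (x-1) powr p)) + x powr p
    \<le> p/(p+1) * (x powr p * (x+1) powr p / ((x+1) powr p - x powr p))"
proof -
  define X where "X = x powr p"
  define P where "P = (x+1) powr p"
  define M where "M = (x-1) powr p"
  have c: "X*P + X*M \<le> (1+p)*X^2 + (1-p)*(P*M)"
    using core[OF assms] by (simp add: X_def P_def M_def)
  have M0: "M \<ge> 0" by (simp add: M_def)
  have XM: "M < X" unfolding M_def X_def using assms by (intro powr_less_mono2) auto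
  have XP: "X < P" unfolding P_def X_def using assms by (intro powr_less_mono2) auto
  have D0: "X - M > 0" and D1: "P - X > 0" using XM XP by auto
  have X0: "X > 0" using XM M0 by simp
  have key: "p*M*X*(P-X) + (p+1)*X*(X-M)*(P-X) \<le> p*X*P*(X-M)"
  proof -
    have "p*X*P*(X-M) - (p*M*X*(P-X) + (p+1)*X*(X-M)*(P-X))
        = X * ((1+p)*X^2 + (1-p)*(P*M) - (X*P + X*M))"
      by (simp add: algebra_simps power2_eq_square)
    also have "\<dots> \<ge> 0" using X0 c by simp
    finally show ?thesis by simp
  qed
  define Q where "Q = (p+1)*(X-M)*(P-X)"
  have Q: "Q > 0" using D0 D1 assms(1) by (simp add: Q_def)
  define c where "c = p/(p+1)"
  define A where "A = M * X / (X - M)"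
  define B where "B = X * P / (P - X)"
  have c: "c*(p+1) = p" using assms(1) by (simp add: c_def)
  have A: "A*(X-M) = M*X" using D0 by (simp add: A_def)
  have B: "B*(P-X) = X*P" using D1 by (simp add: B_def)
  have l0: "(c*A + X) * Q = (c*(p+1))*(A*(X-M))*(P-X) + (p+1)*X*(X-M)*(P-X)"
    unfolding Q_def by (simp add: algebra_simps)
  have r0: "(c*B) * Q = (c*(p+1))*(B*(P-X))*(X-M)"
    unfolding Q_def by (simp add: algebra_simps)
  have l: "p/(p+1) * (M * X / (X - M)) + X = (p*M*X*(P-X) + (p+1)*X*(X-M)*(P-X)) / Q"
    using Q l0 unfolding c A by (simp add: eq_divide_eq c_def A_def algebra_simps)
  have r: "p/(p+1) * (X * P / (P - X)) = p*X*P*(X-M) / Q"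
    using Q r0 unfolding c B by (simp add: eq_divide_eq c_def B_def algebra_simps)
  have "p/(p+1) * (M * X / (X - M)) + X \<le> p/(p+1) * (X * P / (P - X))"
    unfolding l r using key Q by (intro divide_right_mono) auto
  thus ?thesis by (simp add: X_def P_def M_def)
qed

theorem lemma4p4:
  fixes t :: nat and p :: real
  assumes "t \<ge> 1" and "0 < p" and "p \<le> 1"
  shows "(\<Sum>i=1..t. (real i) powr p)
           \<le> p / (p + 1) * ((real t) powr p * (real t + 1) powr p / ((real t + 1) powr p - (real t) powr p))"
proof -
  have "\<And>n::nat. (\<Sum>i=1..n. (real i) powr p)
           \<le> p / (p + 1) * ((real n) powr p * (real n + 1) powr p / ((real n + 1) powr p - (real n) powr p))"
  proof -
    fix n :: nat
    show "(\<Sum>i=1..n. (real i) powr p)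
           \<le> p / (p + 1) * ((real n) powr p * (real n + 1) powr p / ((real n + 1) powr p - (real n) powr p))"
    proof (induction n)
      case 0
      then show ?case by simp
    next
      case (Suc n)
      have s: "p/(p+1) * ((real (Suc n) - 1) powr p * real (Suc n) powr p / (real (Suc n) powr p - (real (Suc n) - 1) powr p)) + real (Suc n) powr p
    \<le> p/(p+1) * (real (Suc n) powr p * (real (Suc n) + 1) powr p / ((real (Suc n) + 1) powr p - real (Suc n) powr p))"
        by (rule step) (use assms in auto)
      have "(\<Sum>i=1..Suc n. (real i) powr p) = (\<Sum>i=1..n. (real i) powr p) + real (Suc n) powr p"
        by simp
      also have "\<dots> \<le> p/(p+1) * ((real n) powr p * (real n + 1) powr p / ((real n + 1) powr p - (real n) powr p)) + real (Suc n) powr p"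
        using Suc.IH by simp
      also have "\<dots> \<le> p/(p+1) * (real (Suc n) powr p * (real (Suc n) + 1) powr p / ((real (Suc n) + 1) powr p - real (Suc n) powr p))"
        using s by (simp add: add.commute)
      finally show ?case .
    qed
  qed
  thus ?thesis .
qed
end
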